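(* Let $T\ge1$, $n\ge2$, $\mu\in\mathbb{R}$, $\sigma>0$, $z^*\in\mathbb{R}$, $\tau\in\{1,\dots,T\}$. Under $\mathbf{H_0}$ the real numbers $X_{t,k}$ ($t\le T$, $k\le n$) are i.i.d. $\mathcal{N}(\mu,\sigma^2)$; under $\mathbf{H_1^\tau}$ they are generated the same way and then $X_{\tau,J}$ is replaced by $z^*$, with $J$ uniform on $\{1,\dots,n\}$ independent of the data. Let $\bar X_\tau=\frac1n\sum_{k=1}^nX_{\tau,k}$ and \[ \log\mathrm{LR}_\tau=-\frac12\log\Big(\frac{n-1}{n}\Big)-\frac{n}{2(n-1)\sigma^2}(\bar X_\tau-\mu)^2+\frac{(z^*-\mu)n}{(n-1)\sigma^2}(\bar X_\tau-\mu)-\frac{(z^*-\mu)^2}{2(n-1)\sigma^2}. \] For $\gamma\in\mathbb{R}$ let $\beta(\gamma)=\mathbb{P}_{\mathbf{H_1^\tau}}(\log\mathrm{LR}_\tau<\gamma)$. Define $\gamma_{\max}=\frac12\big[\frac{(z^*-\mu)^2}{\sigma^2}-\log\big(\frac{n-1}{n}\big)\big]$, $m^*=\frac{(z^*-\mu)^2}{\sigma^2}$, $a=\sqrt{m^*n}$ and $b(\gamma)=\sqrt{(n-1)\big(m^*-\log(1-\frac1n)-2\gamma\big)}$. Then for every $\gamma\le\gamma_{\max}$, \[ \beta(\gamma)=\Phi\Big(a\sqrt{\tfrac{n-1}{n}}-b(\gamma)\sqrt{\tfrac{n}{n-1}}\Big)+\Phi\Big(-a\sqrt{\tfrac{n-1}{n}}-b(\gamma)\sqrt{\tfrac{n}{n-1}}\Big),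 \] where $\Phi$ is the standard normal cumulative distribution function.
   Context: $\beta(\gamma)$ is the Type II error of the test that declares "target present" when $\log\mathrm{LR}_\tau\ge\gamma$. *)

theory Defs
  imports "HOL-Probability.Probability"
begin

definition Phi :: "real \<Rightarrow> real" where
  "Phi x = measure (density lborel std_normal_density) {..x}"

definition idx :: "nat \<Rightarrow> nat \<Rightarrow> (nat \<times> nat) set" where
  "idx T n = {1..T} \<times> {1..n}"

definition H0 :: "nat \<Rightarrow> nat \<Rightarrow> real \<Rightarrow> real \<Rightarrow> ((nat \<times> nat) \<Rightarrow> real) measure" where
  "H0 T n mu sg = PiM (idx T n) (\<lambda>_. density lborel (normal_density mu sg))"

definition H1 :: "nat \<Rightarrow> nat \<Rightarrow> real \<Rightarrow> real \<Rightarrow> real \<Rightarrow> nat \<Rightarrow> ((nat \<times> nat) \<Rightarrow> real) measure" where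
  "H1 T n mu sg zstar tau =
     distr (H0 T n mu sg \<Otimes>\<^sub>M measure_pmf (pmf_of_set {1..n}))
           (PiM (idx T n) (\<lambda>_. borel))
           (\<lambda>(x, j). x((tau, j) := zstar))"

definition Xbar :: "nat \<Rightarrow> nat \<Rightarrow> ((nat \<times> nat) \<Rightarrow> real) \<Rightarrow> real" where
  "Xbar n tau x = (\<Sum>k = 1..n. x (tau, k)) / real n"

definition logLR :: "nat \<Rightarrow> real \<Rightarrow> real \<Rightarrow> real \<Rightarrow> nat \<Rightarrow> ((nat \<times> nat) \<Rightarrow> real) \<Rightarrow> real" where
  "logLR n mu sg zstar tau x =
     - 1/2 * ln ((real n - 1) / real n)
     - real n / (2 * (real n - 1) * sg\<^sup>2) * (Xbar n tau x - mu)\<^sup>2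
     + (zstar - mu) * real n / ((real n - 1) * sg\<^sup>2) * (Xbar n tau x - mu)
     - (zstar - mu)\<^sup>2 / (2 * (real n - 1) * sg\<^sup>2)"

definition typeII_err :: "nat \<Rightarrow> nat \<Rightarrow> real \<Rightarrow> real \<Rightarrow> real \<Rightarrow> nat \<Rightarrow> real \<Rightarrow> real" where
  "typeII_err T n mu sg zstar tau gamma =
     measure (H1 T n mu sg zstar tau)
       {x \<in> space (H1 T n mu sg zstar tau). logLR n mu sg zstar tau x < gamma}"

end

theory Submission
  imports Defs
begin


abbreviation "stdN \<equiv> density lborel std_normal_density"

lemma stdN_prob: "prob_space stdN"
  by (rule prob_space_normal_density) simp

lemma stdN_single: "measure stdN {x} = 0"
proof -
  have "emeasure stdN {x} = (\<integral>\<^sup>+y. ennreal (std_normal_density y) * indicator {x} y \<partial>lborel)"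
    by (simp add: emeasure_density)
  also have "\<dots> = (\<integral>\<^sup>+y. 0 \<partial>(lborel::real measure))"
    by (intro nn_integral_cong_AE, insert AE_lborel_singleton[of x]) (auto elim!: eventually_mono)
  finally show ?thesis by (simp add: measure_def)
qed

lemma stdN_sym: "distr stdN lborel uminus = stdN"
proof -
  interpret prob_space stdN by (rule stdN_prob)
  have d: "distributed stdN lborel (\<lambda>x. x) std_normal_density"
    unfolding distributed_def by (simp add: distr_id2)
  have "distributed stdN lborel (\<lambda>x. 0 + (-1) * x) (normal_density (0 + (-1) * 0) (\<bar>-1\<bar> * 1))"
    by (rule normal_density_affine[OF d]) auto
  then show ?thesis unfolding distributed_def by (simp add: fun_eq_iff comp_def)
qed

lemma Phi_lt: "measure stdN {..<x} = Phi x"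
proof -
  interpret prob_space stdN by (rule stdN_prob)
  have e: "{..x} = {..<x} \<union> {x}" by auto
  have "measure stdN ({..<x} \<union> {x}) = measure stdN {..<x} + measure stdN {x}"
    by (rule finite_measure_Union) auto
  then have "Phi x = measure stdN {..<x} + measure stdN {x}"
    unfolding Phi_def e .
  then show ?thesis using stdN_single by simp
qed

lemma Phi_neg: "Phi (- x) = measure stdN {x..}"
proof -
  interpret prob_space stdN by (rule stdN_prob)
  have "Phi (-x) = measure (distr stdN lborel uminus) {..-x}" unfolding Phi_def stdN_sym ..
  also have "\<dots> = measure stdN (uminus -` {..-x} \<inter> space stdN)"
    by (rule measure_distr) auto
  also have "uminus -` {..-x} \<inter> space stdN = {x..}" by auto
  finally show ?thesis .
qed

lemma Phi_gt: "measure stdN {x<..} = Phi (- x)"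
proof -
  interpret prob_space stdN by (rule stdN_prob)
  have e: "{x..} = {x<..} \<union> {x}" by auto
  have "measure stdN ({x<..} \<union> {x}) = measure stdN {x<..} + measure stdN {x}"
    by (rule finite_measure_Union) auto
  then have "measure stdN {x..} = measure stdN {x<..} + measure stdN {x}"
    unfolding e .
  then show ?thesis using stdN_single Phi_neg by simp
qed

lemma stdN_abs: 
  assumes "r \<ge> 0"
  shows "measure stdN {w. r < \<bar>w - c\<bar>} = Phi (c - r) + Phi (- c - r)"
proof -
  interpret prob_space stdN by (rule stdN_prob)
  have "{w. r < \<bar>w - c\<bar>} = {..<c-r} \<union> {c+r<..}" by auto
  moreover have "{..<c-r} \<inter> {c+r<..} = {}" using assms by auto
  ultimately have "measure stdN {w. r < \<bar>w - c\<bar>} = measure stdN {..<c-r} + measure stdN {c+r<..}"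
    by (simp add: finite_measure_Union)
  then show ?thesis by (simp add: Phi_lt Phi_gt)
qed



lemma P0_facts:
  fixes I :: "'i set" and mu sg :: real
  assumes N_def: "N = density lborel (normal_density mu sg)"
  assumes sg: "sg > 0" and I: "finite I" "I \<noteq> {}"
  shows "prob_space (PiM I (\<lambda>_. N))"
    and "prob_space.indep_vars (PiM I (\<lambda>_. N)) (\<lambda>_. borel) (\<lambda>i x. x i) I"
    and "\<And>i. i \<in> I \<Longrightarrow> distributed (PiM I (\<lambda>_. N)) lborel (\<lambda>x. x i) (normal_density mu sg)"
proof -
  have pN: "prob_space N" unfolding N_def by (rule prob_space_normal_density) (use sg in simp)
  show pP: "prob_space (PiM I (\<lambda>_. N))" by (rule prob_space_PiM) (rule pN)
  interpret P: prob_space "PiM I (\<lambda>_. N)" by (rule pP)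
  have sN: "sets N = sets borel" unfolding N_def by simp
  have comp: "distr (PiM I (\<lambda>_. N)) M (\<lambda>x. x i) = N" if "i \<in> I" "sets M = sets borel" for i and M :: "real measure"
  proof -
    have "distr (PiM I (\<lambda>_. N)) M (\<lambda>x. x i) = distr (PiM I (\<lambda>_. N)) N (\<lambda>x. x i)"
      by (rule distr_cong) (simp_all add: sN that)
    also have "\<dots> = N" by (rule distr_PiM_component) (simp_all add: pN that)
    finally show ?thesis .
  qed
  have rv: "(\<lambda>x. x i) \<in> measurable (PiM I (\<lambda>_. N)) borel" if "i \<in> I" for i
  proof -
    have "(\<lambda>x. x i) \<in> measurable (PiM I (\<lambda>_. N)) N" by (rule measurable_component_singleton) (rule that)
    then show ?thesis using measurable_cong_sets[OF refl sN, of "PiM I (\<lambda>_. N)"] by blast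
  qed
  have sP: "sets (PiM I (\<lambda>_. borel)) = sets (PiM I (\<lambda>_. N))"
    by (rule sets_PiM_cong) (simp_all add: sN)
  have "distr (PiM I (\<lambda>_. N)) (PiM I (\<lambda>_. borel)) (\<lambda>x. \<lambda>i\<in>I. x i) = distr (PiM I (\<lambda>_. N)) (PiM I (\<lambda>_. N)) (\<lambda>x. x)"
    by (rule distr_cong) (auto simp: sP space_PiM PiE_def extensional_def restrict_def fun_eq_iff)
  also have "\<dots> = PiM I (\<lambda>_. N)" by simp
  also have "\<dots> = PiM I (\<lambda>i. distr (PiM I (\<lambda>_. N)) borel (\<lambda>x. x i))"
    by (rule PiM_cong) (simp_all add: comp)
  finally show "P.indep_vars (\<lambda>_. borel) (\<lambda>i x. x i) I"
    by (subst P.indep_vars_iff_distr_eq_PiM'[OF I(2) rv])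
  show "distributed (PiM I (\<lambda>_. N)) lborel (\<lambda>x. x i) (normal_density mu sg)" if "i \<in> I" for i
    unfolding distributed_def
  proof (intro conjI)
    show "distr (PiM I (\<lambda>_. N)) lborel (\<lambda>x. x i) = density lborel (\<lambda>x. ennreal (normal_density mu sg x))"
      using comp[OF that, of lborel] by (simp add: N_def)
    show "(\<lambda>x. ennreal (normal_density mu sg x)) \<in> borel_measurable lborel" by simp
    show "(\<lambda>x. x i) \<in> measurable (PiM I (\<lambda>_. N)) lborel" using rv[OF that] by simp
  qed
qed

lemma Z_meas:
  fixes I K :: "'i set" and mu sg :: real
  assumes N_def: "N = density lborel (normal_density mu sg)"
  assumes sg: "sg > 0" and I: "finite I" and K: "K \<subseteq> I" "K \<noteq> {}" and B: "B \<in> sets borel"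
  shows "measure (PiM I (\<lambda>_. N)) {x \<in> space (PiM I (\<lambda>_. N)).
            ((\<Sum>i\<in>K. x i) - real (card K) * mu) / (sg * sqrt (real (card K))) \<in> B}
         = measure (density lborel std_normal_density) B"
proof -
  have I0: "I \<noteq> {}" using K by auto
  have fK: "finite K" using K I finite_subset by blast
  note F = P0_facts[OF N_def sg I I0]
  interpret P: prob_space "PiM I (\<lambda>_. N)" by (rule F(1))
  have "distributed (PiM I (\<lambda>_. N)) lborel (\<lambda>x. \<Sum>i\<in>K. x i)
          (normal_density (\<Sum>i\<in>K. mu) (sqrt (\<Sum>i\<in>K. sg\<^sup>2)))"
    by (rule P.sum_indep_normal[OF fK K(2)]) (use K P.indep_vars_subset[OF F(2) K(1)] in \<open>auto intro: sg F(3)\<close>)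
  then have d: "distributed (PiM I (\<lambda>_. N)) lborel (\<lambda>x. \<Sum>i\<in>K. x i)
          (normal_density (real (card K) * mu) (sg * sqrt (real (card K))))"
    using sg by (simp add: real_sqrt_mult mult.commute)
  have pos: "0 < sg * sqrt (real (card K))" using sg fK K(2) by (simp add: card_gt_0_iff)
  have "distributed (PiM I (\<lambda>_. N)) lborel
          (\<lambda>x. ((\<Sum>i\<in>K. x i) - real (card K) * mu) / (sg * sqrt (real (card K)))) std_normal_density"
    using d P.normal_standard_normal_convert[OF pos] by simp
  then have dd: "distr (PiM I (\<lambda>_. N)) lborel
          (\<lambda>x. ((\<Sum>i\<in>K. x i) - real (card K) * mu) / (sg * sqrt (real (card K)))) = density lborel std_normal_density"
    and m: "(\<lambda>x. ((\<Sum>i\<in>K. x i) - real (card K) * mu) / (sg * sqrt (real (card K)))) \<in> measurable (PiM I (\<lambda>_. N)) lborel"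
    unfolding distributed_def by auto
  show ?thesis
    unfolding dd[symmetric] using B m
    by (subst measure_distr) (auto intro!: arg_cong[where f="measure _"])
qed



lemma s1a: fixes nn sg d Y :: real assumes "nn - 1 \<noteq> 0" "sg \<noteq> 0"
  shows "- nn / (2 * (nn - 1) * sg\<^sup>2) * Y\<^sup>2 + d * nn / ((nn - 1) * sg\<^sup>2) * Y - d\<^sup>2 / (2 * (nn - 1) * sg\<^sup>2)
      = d\<^sup>2 / (2 * sg\<^sup>2) - nn / (2 * (nn - 1) * sg\<^sup>2) * (Y - d)\<^sup>2"
proof -
  define k where "k = (nn - 1) * sg\<^sup>2"
  have k: "k \<noteq> 0" using assms by (simp add: k_def)
  have h: "d\<^sup>2 / (2 * sg\<^sup>2) = (nn - 1) * d\<^sup>2 / (2 * k)" using assms by (simp add: k_def)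
  have "- nn / (2 * k) * Y\<^sup>2 + d * nn / k * Y - d\<^sup>2 / (2 * k) = (- nn * Y\<^sup>2 + 2 * d * nn * Y - d\<^sup>2) / (2 * k)"
    using k by (simp add: field_simps)
  also have "\<dots> = ((nn - 1) * d\<^sup>2 - nn * (Y - d)\<^sup>2) / (2 * k)"
    by (simp add: power2_eq_square algebra_simps)
  also have "\<dots> = (nn - 1) * d\<^sup>2 / (2 * k) - nn / (2 * k) * (Y - d)\<^sup>2"
    using k by (simp add: field_simps)
  finally have "- nn / (2 * k) * Y\<^sup>2 + d * nn / k * Y - d\<^sup>2 / (2 * k) = (nn - 1) * d\<^sup>2 / (2 * k) - nn / (2 * k) * (Y - d)\<^sup>2" .
  then show ?thesis unfolding h k_def by (simp only: mult.assoc)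
qed

lemma alg:
  fixes nn mu sg zstar S :: real
  assumes n: "nn \<ge> 2" and sg: "sg > 0"
  shows "- 1/2 * ln ((nn - 1) / nn) - nn / (2 * (nn - 1) * sg\<^sup>2) * ((zstar + S) / nn - mu)\<^sup>2
     + (zstar - mu) * nn / ((nn - 1) * sg\<^sup>2) * ((zstar + S) / nn - mu)
     - (zstar - mu)\<^sup>2 / (2 * (nn - 1) * sg\<^sup>2)
   = - 1/2 * ln ((nn - 1) / nn) + (zstar - mu)\<^sup>2 / (2 * sg\<^sup>2)
     - ((S - (nn - 1) * mu) / (sg * sqrt (nn - 1)) - sqrt (nn - 1) * (zstar - mu) / sg)\<^sup>2 / (2 * nn)"
proof -
  define q where "q = sqrt (nn - 1)"
  define l where "l = ln ((nn - 1) / nn)"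
  define d where "d = zstar - mu"
  define Y where "Y = (zstar + S) / nn - mu"
  define A where "A = S - (nn - 1) * mu - (nn - 1) * d"
  have q: "q > 0" "q * q = nn - 1" using n by (auto simp: q_def)
  have n1: "nn - 1 \<noteq> 0" "nn \<noteq> 0" "nn - 1 > 0" using n by auto
  have "(S - (nn - 1) * mu) / (sg * q) - q * d / sg = A / (sg * q)"
    using q sg unfolding A_def by (simp add: field_simps flip: q(2))
  then have e: "((S - (nn - 1) * mu) / (sg * q) - q * d / sg)\<^sup>2 = A\<^sup>2 / (sg\<^sup>2 * (nn - 1))"
    by (simp add: power_divide power_mult_distrib flip: q(2)) (simp add: power2_eq_square)
  have s1: "- nn / (2 * (nn - 1) * sg\<^sup>2) * Y\<^sup>2 + d * nn / ((nn - 1) * sg\<^sup>2) * Y - d\<^sup>2 / (2 * (nn - 1) * sg\<^sup>2)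
      = d\<^sup>2 / (2 * sg\<^sup>2) - nn / (2 * (nn - 1) * sg\<^sup>2) * (Y - d)\<^sup>2"
    using n1 sg by (intro s1a) auto
  have yd: "Y - d = A / nn" unfolding Y_def A_def d_def using n1 by (simp add: field_simps)
  have s2: "nn / (2 * (nn - 1) * sg\<^sup>2) * (A / nn)\<^sup>2 = A\<^sup>2 / (sg\<^sup>2 * (nn - 1)) / (2 * nn)"
    using n1 sg by (simp add: field_simps power2_eq_square)
  show ?thesis unfolding q_def[symmetric] l_def[symmetric] d_def[symmetric] Y_def[symmetric] e
    using s1 s2 yd by simp
qed


theorem lemma3p6:
  fixes T n tau :: nat and mu sg zstar gamma :: real
  assumes "T \<ge> 1" and "n \<ge> 2" and "sg > 0" and "tau \<in> {1..T}"
    and "gamma \<le> 1/2 * ((zstar - mu)\<^sup>2 / sg\<^sup>2 - ln ((real n - 1) / real n))"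
  shows "let mstar = (zstar - mu)\<^sup>2 / sg\<^sup>2;
             a = sqrt (mstar * real n);
             b = sqrt ((real n - 1) * (mstar - ln (1 - 1 / real n) - 2 * gamma))
         in typeII_err T n mu sg zstar tau gamma =
              Phi (a * sqrt ((real n - 1) / real n) - b * sqrt (real n / (real n - 1)))
            + Phi (- a * sqrt ((real n - 1) / real n) - b * sqrt (real n / (real n - 1)))"
proof -
  note T = assms(1) and n2 = assms(2) and sg = assms(3) and tau = assms(4) and gam = assms(5)
  define nn where "nn = real n"
  have nn2: "nn \<ge> 2" using n2 unfolding nn_def by simp
  define N where "N = density lborel (normal_density mu sg)"
  define I where "I = idx T n"
  define P0 where "P0 = PiM I (\<lambda>_. N)"
  define Q where "Q = measure_pmf (pmf_of_set {1..n})"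
  define M where "M = P0 \<Otimes>\<^sub>M Q"
  define NB where "NB = PiM I (\<lambda>_. borel :: real measure)"
  define h where "h = (\<lambda>j (x::nat\<times>nat \<Rightarrow> real). x((tau,j):=zstar))"
  define g where "g = (\<lambda>(x,j). h j x)"
  define g' where "g' = (\<lambda>(x,j). if j \<in> {1..n} then h j x else x)"
  define d where "d = zstar - mu"
  define c where "c = sqrt (nn - 1) * d / sg"
  define q0 where "q0 = d\<^sup>2 / sg\<^sup>2 - ln ((nn - 1) / nn) - 2 * gamma"
  define r where "r = sqrt (nn * q0)"
  define p where "p = Phi (c - r) + Phi (- c - r)"
  define E where "E = {x \<in> space NB. logLR n mu sg zstar tau x < gamma}"
  have q0: "q0 \<ge> 0" using gam unfolding q0_def d_def nn_def by simp
  have r0: "r \<ge> 0" unfolding r_def using q0 nn2 by simp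
  have fI: "finite I" "I \<noteq> {}" using T n2 by (auto simp: I_def idx_def)
  have tI: "(tau, j) \<in> I" if "j \<in> {1..n}" for j using tau that by (auto simp: I_def idx_def)
  have pP0: "prob_space P0" unfolding P0_def by (rule P0_facts(1)[OF N_def sg fI])
  have pQ: "prob_space Q" unfolding Q_def by (rule prob_space_measure_pmf)
  interpret pair_prob_space P0 Q using pP0 pQ by (simp add: pair_prob_space_def pair_sigma_finite_def prob_space_imp_sigma_finite)
  have sN: "sets N = sets borel" unfolding N_def by simp
  have sP0: "sets P0 = sets NB" unfolding P0_def NB_def by (rule sets_PiM_cong) (simp_all add: sN)
  have spP0: "space P0 = space NB" using sP0 by (rule sets_eq_imp_space_eq)
  have spNB: "space NB = (\<Pi>\<^sub>E i\<in>I. UNIV)" unfolding NB_def by (simp add: space_PiM)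
  have idm: "(\<lambda>x. x) \<in> measurable P0 NB" using measurable_ident_sets[OF sP0] .
  have hmeas: "h j \<in> measurable P0 NB" if j: "j \<in> {1..n}" for j
  proof -
    have "(\<lambda>x i. (if i = (tau, j) then zstar else x i)) \<in> measurable P0 NB"
      unfolding NB_def
    proof (rule measurable_PiM_single')
      fix i assume "i \<in> I"
      have "(\<lambda>x. x i) \<in> measurable P0 borel"
        using measurable_component_singleton[OF \<open>i \<in> I\<close>, of "\<lambda>_. borel"] measurable_cong_sets[OF sP0 refl]
        unfolding NB_def by blast
      then show "(\<lambda>x. if i = (tau, j) then zstar else x i) \<in> borel_measurable P0" by simp
    next
      show "(\<lambda>x i. if i = (tau, j) then zstar else x i) \<in> space P0 \<rightarrow> (\<Pi>\<^sub>E i\<in>I. space borel)"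
        using tI[OF j] by (auto simp: spP0 spNB PiE_def extensional_def)
    qed
    moreover have "h j = (\<lambda>x i. (if i = (tau, j) then zstar else x i))"
      unfolding h_def by (auto simp: fun_eq_iff)
    ultimately show ?thesis by simp
  qed
  have snd_meas: "snd \<in> measurable M (count_space UNIV)"
    unfolding M_def using measurable_snd[of P0 Q] by (simp add: Q_def measurable_cong_sets)
  have g'meas: "g' \<in> measurable M NB"
  proof -
    have "(\<lambda>\<omega>. (\<lambda>j \<omega>. if j \<in> {1..n} then h j (fst \<omega>) else fst \<omega>) (snd \<omega>) \<omega>) \<in> measurable M NB"
    proof (rule measurable_compose_countable[OF _ snd_meas])
      fix j :: nat
      show "(\<lambda>\<omega>. if j \<in> {1..n} then h j (fst \<omega>) else fst \<omega>) \<in> measurable M NB"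
      proof (cases "j \<in> {1..n}")
        case True
        then show ?thesis unfolding M_def using measurable_comp[OF measurable_fst hmeas[OF True]]
          by (simp add: comp_def)
      next
        case False
        then have "(\<lambda>\<omega>::(nat\<times>nat\<Rightarrow>real)\<times>nat. if j \<in> {1..n} then h j (fst \<omega>) else fst \<omega>) = (\<lambda>\<omega>. fst \<omega>)" by auto
        moreover have "(\<lambda>\<omega>. fst \<omega>) \<in> measurable M NB" unfolding M_def using measurable_comp[OF measurable_fst idm]
          by (simp add: comp_def)
        ultimately show ?thesis by simp
      qed
    qed
    then show ?thesis unfolding g'_def by (simp add: case_prod_beta')
  qed

  have fstm: "fst \<in> measurable M NB" unfolding M_def using measurable_comp[OF measurable_fst idm]
    by (simp add: comp_def)
  have spM: "space M = space P0 \<times> UNIV" unfolding M_def Q_def by (simp add: space_pair_measure)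
  have gsets: "g -` a \<inter> space M \<in> sets M" if a: "a \<in> sets NB" for a
  proof -
    have aNB: "a \<subseteq> space NB" using sets.sets_into_space[OF a] .
    have hj: "Measurable.pred M (\<lambda>\<omega>. h j (fst \<omega>) \<in> a)" for j :: nat
      proof (cases "j \<in> {1..n}")
        case True
        have "(\<lambda>\<omega>. h j (fst \<omega>)) \<in> measurable M NB"
          unfolding M_def using measurable_comp[OF measurable_fst hmeas[OF True]] by (simp add: comp_def)
        from pred_sets2[OF a this] show ?thesis by simp
      next
        case False
        then have nI: "(tau, j) \<notin> I" by (auto simp: I_def idx_def)
        show ?thesis
        proof (cases "zstar = undefined")
          case True
          have "Measurable.pred M (\<lambda>\<omega>. fst \<omega> \<in> a)" by (rule pred_sets2[OF a fstm])
          moreover have "h j (fst \<omega>) = fst \<omega>" if "\<omega> \<in> space M" for \<omega>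
          proof -
            have "fst \<omega> \<in> space NB" using that spM spP0 by auto
            then have "fst \<omega> (tau, j) = undefined" using nI by (auto simp: spNB PiE_def extensional_def)
            then show ?thesis unfolding h_def using True by auto
          qed
          ultimately show ?thesis by (subst measurable_cong) auto
        next
          case False
          have "h j (fst \<omega>) \<notin> a" if "\<omega> \<in> space M" for \<omega>
          proof
            assume "h j (fst \<omega>) \<in> a"
            then have "h j (fst \<omega>) \<in> space NB" using aNB by auto
            then have "h j (fst \<omega>) (tau, j) = undefined" using nI by (auto simp: spNB PiE_def extensional_def)
            then show False using False by (simp add: h_def)
          qed
          then show ?thesis by (subst measurable_cong[where g="\<lambda>_. False"]) auto
        qed
      qed
    have "Measurable.pred M (\<lambda>\<omega>. (\<lambda>j \<omega>. h j (fst \<omega>) \<in> a) (snd \<omega>) \<omega>)"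
      by (rule measurable_compose_countable[OF hj snd_meas])
    then have "{\<omega> \<in> space M. h (snd \<omega>) (fst \<omega>) \<in> a} \<in> sets M" by (simp add: pred_def)
    moreover have "g -` a \<inter> space M = {\<omega> \<in> space M. h (snd \<omega>) (fst \<omega>) \<in> a}"
      unfolding g_def by auto
    ultimately show ?thesis by simp
  qed
  have AEj: "AE \<omega> in M. snd \<omega> \<in> {1..n}"
    unfolding M_def
  proof (rule AE_pair_measure)
    show "{x \<in> space (P0 \<Otimes>\<^sub>M Q). snd x \<in> {1..n}} \<in> sets (P0 \<Otimes>\<^sub>M Q)"
    proof -
      have "Measurable.pred M (\<lambda>x. snd x \<in> {1..n})" by (rule pred_sets2[OF _ snd_meas]) simp
      then show ?thesis unfolding pred_def M_def .
    qed
    show "AE x in P0. AE y in Q. snd (x, y) \<in> {1..n}"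
      unfolding Q_def using n2 by (simp add: AE_measure_pmf_iff)
  qed
  have H1eq: "H1 T n mu sg zstar tau = distr M NB g'"
  proof -
    have "H1 T n mu sg zstar tau = distr M NB g"
      unfolding H1_def H0_def M_def P0_def Q_def NB_def I_def N_def g_def h_def by simp
    also have "\<dots> = distr M NB g'"
      unfolding distr_def
    proof (rule measure_of_eq)
      show "sets NB \<subseteq> Pow (space NB)" by (rule sets.space_closed)
      fix a assume "a \<in> sigma_sets (space NB) (sets NB)"
      then have a: "a \<in> sets NB" by (simp add: sets.sigma_sets_eq)
      show "emeasure M (g -` a \<inter> space M) = emeasure M (g' -` a \<inter> space M)"
      proof (rule emeasure_eq_AE)
        show "AE x in M. (x \<in> g -` a \<inter> space M) = (x \<in> g' -` a \<inter> space M)"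
          using AEj by eventually_elim (auto simp: g_def g'_def)
        show "g -` a \<inter> space M \<in> sets M" by (rule gsets[OF a])
        show "g' -` a \<inter> space M \<in> sets M" by (rule measurable_sets[OF g'meas a])
      qed
    qed
    finally show ?thesis .
  qed

  have Xm: "Xbar n tau \<in> borel_measurable NB"
  proof -
    have "(\<lambda>x. x (tau, k)) \<in> borel_measurable NB" if "k \<in> {1..n}" for k
      unfolding NB_def by (rule measurable_component_singleton[OF tI[OF that]])
    then have "(\<lambda>x. \<Sum>k = 1..n. x (tau, k)) \<in> borel_measurable NB" by (rule borel_measurable_sum)
    then show ?thesis unfolding Xbar_def[abs_def] by measurable
  qed
  have Lm: "logLR n mu sg zstar tau \<in> borel_measurable NB"
    unfolding logLR_def[abs_def] using Xm by measurable
  have Emeas: "E \<in> sets NB" unfolding E_def using Lm by measurable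
  define K where "K = (\<lambda>j. (\<lambda>k. (tau, k)) ` ({1..n} - {j}))"
  define W where "W = (\<lambda>j x. ((\<Sum>i\<in>K j. x i) - real (card (K j)) * mu) / (sg * sqrt (real (card (K j)))))"
  define B where "B = {w. r < \<bar>w - c\<bar>}"
  have cardK: "card (K j) = n - 1" if "j \<in> {1..n}" for j
    unfolding K_def using that by (subst card_image) (auto simp: inj_on_def)
  have rn1: "real (n - 1) = nn - 1" using n2 unfolding nn_def by simp
  have key: "logLR n mu sg zstar tau (h j x) < gamma \<longleftrightarrow> W j x \<in> B" if j: "j \<in> {1..n}" for j x
  proof -
    define S where "S = (\<Sum>k \<in> {1..n} - {j}. x (tau, k))"
    have SK: "(\<Sum>i\<in>K j. x i) = S" unfolding K_def S_def by (subst sum.reindex) (auto simp: inj_on_def)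
    have "(\<Sum>k = 1..n. h j x (tau, k)) = h j x (tau, j) + (\<Sum>k \<in> {1..n} - {j}. h j x (tau, k))"
      using j by (subst sum.remove[of _ j]) auto
    also have "\<dots> = zstar + S" unfolding S_def h_def by (auto intro!: sum.cong)
    finally have Xb: "Xbar n tau (h j x) = (zstar + S) / nn" unfolding Xbar_def nn_def by simp
    have WS: "W j x = (S - (nn - 1) * mu) / (sg * sqrt (nn - 1))"
      unfolding W_def SK cardK[OF j] rn1 ..
    define e where "e = W j x - c"
    have L: "logLR n mu sg zstar tau (h j x) = - 1/2 * ln ((nn - 1) / nn) + d\<^sup>2 / (2 * sg\<^sup>2) - e\<^sup>2 / (2 * nn)"
      unfolding logLR_def Xb e_def WS c_def d_def nn_def[symmetric] by (rule alg[OF nn2 sg])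
    have "logLR n mu sg zstar tau (h j x) < gamma \<longleftrightarrow> nn * q0 < e\<^sup>2"
    proof -
      define D where "D = d\<^sup>2 / sg\<^sup>2"
      define l where "l = ln ((nn - 1) / nn)"
      define t where "t = e\<^sup>2 / nn"
      have 1: "d\<^sup>2 / (2 * sg\<^sup>2) = D / 2" unfolding D_def by simp
      have 2: "e\<^sup>2 / (2 * nn) = t / 2" unfolding t_def by simp
      have "logLR n mu sg zstar tau (h j x) < gamma \<longleftrightarrow> D - l - 2 * gamma < t"
        unfolding L 1 2 l_def[symmetric] by linarith
      also have "\<dots> \<longleftrightarrow> nn * q0 < e\<^sup>2"
        unfolding t_def q0_def D_def[symmetric] l_def[symmetric] using nn2
        by (simp add: pos_less_divide_eq mult.commute)
      finally show ?thesis .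
    qed
    also have "\<dots> \<longleftrightarrow> r < \<bar>e\<bar>"
      unfolding r_def by (subst real_sqrt_abs[symmetric]) (subst real_sqrt_less_iff, simp)
    finally show ?thesis unfolding B_def e_def by simp
  qed
  have secj: "emeasure P0 ((\<lambda>x. (x, j)) -` (g' -` E \<inter> space M)) = ennreal p" if j: "j \<in> {1..n}" for j
  proof -
    have hsp: "h j x \<in> space NB" if "x \<in> space P0" for x
      using measurable_space[OF hmeas[OF j] that] .
    have "(\<lambda>x. (x, j)) -` (g' -` E \<inter> space M) = {x \<in> space P0. W j x \<in> B}"
      using j hsp key[OF j] unfolding g'_def E_def spM by auto
    moreover have "measure P0 {x \<in> space P0. W j x \<in> B} = measure (density lborel std_normal_density) B"
      unfolding P0_def W_def
    proof (rule Z_meas[OF N_def sg fI(1)])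
      show "K j \<subseteq> I" using tI unfolding K_def by auto
      show "K j \<noteq> {}" using cardK[OF j] n2 by auto
      show "B \<in> sets borel" unfolding B_def by measurable
    qed
    moreover have "measure (density lborel std_normal_density) B = p"
      unfolding B_def p_def by (rule stdN_abs[OF r0])
    ultimately show ?thesis
      using M1.emeasure_eq_measure by simp
  qed

  have p0: "p \<ge> 0" unfolding p_def Phi_def by (simp add: add_nonneg_nonneg)
  have "typeII_err T n mu sg zstar tau gamma = measure (distr M NB g') E"
    unfolding typeII_err_def H1eq E_def by simp
  also have "\<dots> = measure M (g' -` E \<inter> space M)" by (rule measure_distr[OF g'meas Emeas])
  also have "\<dots> = p"
  proof -
    have "emeasure M (g' -` E \<inter> space M) = (\<integral>\<^sup>+j. emeasure P0 ((\<lambda>x. (x, j)) -` (g' -` E \<inter> space M)) \<partial>Q)"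
      unfolding M_def by (rule emeasure_pair_measure_alt2) (use measurable_sets[OF g'meas Emeas] in \<open>simp add: M_def\<close>)
    also have "\<dots> = (\<integral>\<^sup>+j. ennreal p \<partial>Q)"
    proof (rule nn_integral_cong_AE)
      show "AE j in Q. emeasure P0 ((\<lambda>x. (x, j)) -` (g' -` E \<inter> space M)) = ennreal p"
        unfolding Q_def using n2 secj by (simp add: AE_measure_pmf_iff)
    qed
    also have "\<dots> = ennreal p" using M2.emeasure_space_1 by simp
    finally show ?thesis using p0 by (simp add: measure_def)
  qed
  finally have main: "typeII_err T n mu sg zstar tau gamma = p" .
  have nn1: "nn - 1 > 0" using nn2 by simp
  have A: "sqrt ((zstar - mu)\<^sup>2 / sg\<^sup>2 * nn) * sqrt ((nn - 1) / nn) = \<bar>c\<bar>"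
  proof -
    have "sqrt ((zstar - mu)\<^sup>2 / sg\<^sup>2 * nn) * sqrt ((nn - 1) / nn) = sqrt ((d / sg)\<^sup>2 * (nn - 1))"
    proof -
      have "nn * ((nn - 1) / nn) = nn - 1" using nn2 by simp
      then have "(zstar - mu)\<^sup>2 / sg\<^sup>2 * nn * ((nn - 1) / nn) = (d / sg)\<^sup>2 * (nn - 1)"
        unfolding d_def using nn2 by (simp add: power_divide mult.assoc)
      then show ?thesis unfolding real_sqrt_mult[symmetric] by simp
    qed
    also have "\<dots> = \<bar>d / sg\<bar> * sqrt (nn - 1)" by (simp add: real_sqrt_mult)
    also have "\<dots> = \<bar>c\<bar>" unfolding c_def using sg nn1 by (simp add: abs_mult)
    finally show ?thesis .
  qed
  have Bq: "sqrt ((nn - 1) * ((zstar - mu)\<^sup>2 / sg\<^sup>2 - ln (1 - 1 / nn) - 2 * gamma)) * sqrt (nn / (nn - 1)) = r"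
  proof -
    have "1 - 1 / nn = (nn - 1) / nn" using nn2 by (simp add: field_simps)
    then have "(zstar - mu)\<^sup>2 / sg\<^sup>2 - ln (1 - 1 / nn) - 2 * gamma = q0" unfolding q0_def d_def by simp
    moreover have "sqrt ((nn - 1) * q0) * sqrt (nn / (nn - 1)) = sqrt (nn * q0)"
      unfolding real_sqrt_mult[symmetric] using nn1 by (simp add: field_simps)
    ultimately show ?thesis unfolding r_def by simp
  qed
  have fin: "Phi (\<bar>c\<bar> - r) + Phi (- \<bar>c\<bar> - r) = p"
    unfolding p_def by (cases "c \<ge> 0") auto
  show ?thesis
    unfolding Let_def main nn_def[symmetric] minus_mult_left[symmetric] A Bq using fin by simp
qed

end
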